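(* In the setting below, for $x\in V_1$, $\lambda\in F^\times$ and $y\in\mathrm{GSpin}(V_1)(F)$, the element $n(x)m(\lambda,y)$ lies in $\mathrm{Clif}(\Lambda)$ if and only if $y$, $\lambda y$ and $xy$ all lie in $\mathrm{Clif}(\Lambda_1)$.
   Context: $F$ is a $p$-adic local field with ring of integers $\mathcal{O}_F$. $V$ is a quasisplit quadratic space: $V=U^\vee\oplus V_E\oplus U$, $U^\vee=\mathrm{span}(e_1,\dots,e_n)$, $U=\mathrm{span}(f_1,\dots,f_n)$ isotropic, $(e_i,f_j)=\delta_{ij}$ for the bilinear form $(v,w)=q(v+w)-q(v)-q(w)$, $V_E\perp U^\vee\oplus U$ identified with $E$ with form $N_{E/F}$ ($E=F$, $N(t)=t^2$, or $E$ quadratic étale); $n\ge1$. $\Lambda=\bigoplus\mathcal{O}_Fe_i\oplus\mathcal{O}_E\oplus\bigoplus\mathcal{O}_Ff_i$; $V_1=\mathrm{span}(e_2,\dots,e_n,f_2,\dots,f_n)\oplus V_E$, so $V=Fe_1\oplus V_1\oplus Ff_1$; $\Lambda_1=\Lambda\cap V_1$. $\mathrm{Clif}(\cdot)$ denotes Clifford algebras (tensor algebra modulo $v\otimes v-q(v)$), $\mathrm{Clif}(V_1)\subseteq\mathrm{Clif}(V)$, and for a lattice $L$, $\mathrm{Clif}(L)$ is the $\mathcal{O}_F$-subalgebra generated by $L$. $\mathrm{GSpin}(V_1)(F)=\{g\in\mathrm{Clif}^+(V_1):g^*g\in F^\times,\ g^*V_1g\subseteq V_1\}$ with $*$ the order-reversing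 anti-involution. Products below are in $\mathrm{Clif}(V)$: $n(x)=1+f_1x$ for $x\in V_1$, and $m(\lambda,y)=(e_1f_1+\lambda f_1e_1)\,y$. *)

theory Defs
  imports Main
begin

text \<open>A p-adic local field: a field of characteristic 0, complete with respect to a
normalized discrete valuation v (v is only meaningful on nonzero elements), with finite
residue field.\<close>

definition val_ring :: "('a::field \<Rightarrow> int) \<Rightarrow> 'a set" where
  "val_ring v = {x. x = 0 \<or> 0 \<le> v x}"

definition val_ideal :: "('a::field \<Rightarrow> int) \<Rightarrow> 'a set" where
  "val_ideal v = {x. x = 0 \<or> 0 < v x}"

definition padic_local_field :: "('a::field \<Rightarrow> int) \<Rightarrow> bool" where
  "padic_local_field v \<longleftrightarrow>
     (\<forall>k::nat. k > 0 \<longrightarrow> of_nat k \<noteq> (0::'a)) \<and>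
     (\<forall>x y. x \<noteq> 0 \<longrightarrow> y \<noteq> 0 \<longrightarrow> v (x * y) = v x + v y) \<and>
     (\<forall>x y. x \<noteq> 0 \<longrightarrow> y \<noteq> 0 \<longrightarrow> x + y \<noteq> 0 \<longrightarrow> min (v x) (v y) \<le> v (x + y)) \<and>
     (\<exists>\<pi>. \<pi> \<noteq> 0 \<and> v \<pi> = 1) \<and>
     (\<exists>R. finite R \<and> R \<subseteq> val_ring v \<and>
          (\<forall>x\<in>val_ring v. \<exists>r\<in>R. x - r \<in> val_ideal v)) \<and>
     (\<forall>X :: nat \<Rightarrow> 'a.
        (\<forall>k. \<exists>N. \<forall>m\<ge>N. \<forall>l\<ge>N. X m = X l \<or> k \<le> v (X m - X l)) \<longrightarrow>
        (\<exists>L. \<forall>k. \<exists>N. \<forall>m\<ge>N. X m = L \<or> k \<le> v (X m - L)))"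

text \<open>E is either F itself (flag isF), realised as the pairs (a,0), or the quadratic etale
algebra F[w]/(w^2 - t w + s) with t^2 - 4 s \<noteq> 0 (every quadratic etale algebra over a
field of characteristic 0 is of this form); a pair (a,b) stands for a + b w.\<close>

definition emul :: "'a::field \<Rightarrow> 'a \<Rightarrow> 'a \<times> 'a \<Rightarrow> 'a \<times> 'a \<Rightarrow> 'a \<times> 'a" where
  "emul t s z w = (fst z * fst w - s * snd z * snd w,
                   fst z * snd w + snd z * fst w + t * snd z * snd w)"

fun epow :: "'a::field \<Rightarrow> 'a \<Rightarrow> 'a \<times> 'a \<Rightarrow> nat \<Rightarrow> 'a \<times> 'a" where
  "epow t s z 0 = (1, 0)"
| "epow t s z (Suc k) = emul t s z (epow t s z k)"

text \<open>Norm N_{E/F}: determinant of multiplication by a + b w in the basis (1, w).\<close>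
definition enorm :: "'a::field \<Rightarrow> 'a \<Rightarrow> 'a \<times> 'a \<Rightarrow> 'a" where
  "enorm t s z = fst z * (fst z + t * snd z) - (- s * snd z) * snd z"

definition E_space :: "bool \<Rightarrow> ('a::field \<times> 'a) set" where
  "E_space isF = (if isF then {z. snd z = 0} else UNIV)"

definition E_dim :: "bool \<Rightarrow> nat" where
  "E_dim isF = (if isF then 1 else 2)"

text \<open>O_E: the integral closure of O_F in E.\<close>
definition O_E :: "('a::field \<Rightarrow> int) \<Rightarrow> bool \<Rightarrow> 'a \<Rightarrow> 'a \<Rightarrow> ('a \<times> 'a) set" where
  "O_E v isF t s =
     (if isF then {z. snd z = 0 \<and> fst z \<in> val_ring v}
      else {z. \<exists>k>0. \<exists>c::nat \<Rightarrow> 'a. (\<forall>j<k. c j \<in> val_ring v) \<and>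
                fst (epow t s z k) + (\<Sum>j<k. c j * fst (epow t s z j)) = 0 \<and>
                snd (epow t s z k) + (\<Sum>j<k. c j * snd (epow t s z j)) = 0})"

text \<open>A vector (a, z, b) stands for sum_i a_i e_i + z + sum_i b_i f_i, i = 1..n.\<close>
type_synonym 'a qvec = "(nat \<Rightarrow> 'a) \<times> ('a \<times> 'a) \<times> (nat \<Rightarrow> 'a)"

definition Vsp :: "nat \<Rightarrow> bool \<Rightarrow> ('a::field) qvec set" where
  "Vsp n isF = {(a, z, b). (\<forall>i. (i < 1 \<or> n < i) \<longrightarrow> a i = 0 \<and> b i = 0) \<and> z \<in> E_space isF}"

definition vadd :: "('a::field) qvec \<Rightarrow> 'a qvec \<Rightarrow> 'a qvec" where
  "vadd u w = ((\<lambda>i. fst u i + fst w i),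
               (fst (fst (snd u)) + fst (fst (snd w)), snd (fst (snd u)) + snd (fst (snd w))),
               (\<lambda>i. snd (snd u) i + snd (snd w) i))"

definition vscale :: "'a::field \<Rightarrow> 'a qvec \<Rightarrow> 'a qvec" where
  "vscale c u = ((\<lambda>i. c * fst u i), (c * fst (fst (snd u)), c * snd (fst (snd u))),
                 (\<lambda>i. c * snd (snd u) i))"

definition qform :: "nat \<Rightarrow> 'a::field \<Rightarrow> 'a \<Rightarrow> 'a qvec \<Rightarrow> 'a" where
  "qform n t s u = (\<Sum>i=1..n. fst u i * snd (snd u) i) + enorm t s (fst (snd u))"

definition evec :: "nat \<Rightarrow> ('a::field) qvec" where
  "evec i = ((\<lambda>j. if j = i then 1 else 0), (0, 0), (\<lambda>j. 0))"

definition fvec :: "nat \<Rightarrow> ('a::field) qvec" where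
  "fvec i = ((\<lambda>j. 0), (0, 0), (\<lambda>j. if j = i then 1 else 0))"

definition V1sp :: "nat \<Rightarrow> bool \<Rightarrow> ('a::field) qvec set" where
  "V1sp n isF = {u \<in> Vsp n isF. fst u 1 = 0 \<and> snd (snd u) 1 = 0}"

definition Lat :: "('a::field \<Rightarrow> int) \<Rightarrow> nat \<Rightarrow> bool \<Rightarrow> 'a \<Rightarrow> 'a \<Rightarrow> 'a qvec set" where
  "Lat v n isF t s = {u \<in> Vsp n isF. (\<forall>i. fst u i \<in> val_ring v \<and> snd (snd u) i \<in> val_ring v)
                                    \<and> fst (snd u) \<in> O_E v isF t s}"

definition Lat1 :: "('a::field \<Rightarrow> int) \<Rightarrow> nat \<Rightarrow> bool \<Rightarrow> 'a \<Rightarrow> 'a \<Rightarrow> 'a qvec set" where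
  "Lat1 v n isF t s = Lat v n isF t s \<inter> V1sp n isF"

inductive_set alg_gen :: "('a \<Rightarrow> 'c::ring_1) \<Rightarrow> 'a set \<Rightarrow> 'c set \<Rightarrow> 'c set"
  for sc R S where
  scal: "r \<in> R \<Longrightarrow> sc r \<in> alg_gen sc R S"
| gen: "z \<in> S \<Longrightarrow> z \<in> alg_gen sc R S"
| add: "z \<in> alg_gen sc R S \<Longrightarrow> w \<in> alg_gen sc R S \<Longrightarrow> z + w \<in> alg_gen sc R S"
| mult: "z \<in> alg_gen sc R S \<Longrightarrow> w \<in> alg_gen sc R S \<Longrightarrow> z * w \<in> alg_gen sc R S"

inductive_set even_gen :: "('a \<Rightarrow> 'c::ring_1) \<Rightarrow> 'c set \<Rightarrow> 'c set"
  for sc S where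
  scal: "sc r \<in> even_gen sc S"
| gen2: "z \<in> S \<Longrightarrow> w \<in> S \<Longrightarrow> z * w \<in> even_gen sc S"
| add: "z \<in> even_gen sc S \<Longrightarrow> w \<in> even_gen sc S \<Longrightarrow> z + w \<in> even_gen sc S"
| mult: "z \<in> even_gen sc S \<Longrightarrow> w \<in> even_gen sc S \<Longrightarrow> z * w \<in> even_gen sc S"

definition F_lin_indep :: "('a::field \<Rightarrow> 'c::ring_1) \<Rightarrow> 'c set \<Rightarrow> bool" where
  "F_lin_indep sc B \<longleftrightarrow> finite B \<and>
     (\<forall>c. (\<Sum>b\<in>B. sc (c b) * b) = 0 \<longrightarrow> (\<forall>b\<in>B. c b = 0))"

text \<open>(C, sc, iota) is the Clifford algebra Clif(V) of (V, q): C is an F-algebra (via the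
central ring map sc), iota : V -> C is F-linear with iota(u)^2 = q(u), C is generated by
iota(V), and dim_F C = 2^(dim V); these properties characterise Clif(V) up to unique
isomorphism.  star is the order-reversing anti-involution fixing V pointwise.\<close>
definition clifford_alg ::
  "nat \<Rightarrow> bool \<Rightarrow> 'a::field \<Rightarrow> 'a \<Rightarrow> ('a \<Rightarrow> 'c::ring_1) \<Rightarrow> ('a qvec \<Rightarrow> 'c) \<Rightarrow> ('c \<Rightarrow> 'c) \<Rightarrow> bool" where
  "clifford_alg n isF t s sc \<iota> star \<longleftrightarrow>
     sc 1 = 1 \<and> (\<forall>a b. sc (a + b) = sc a + sc b) \<and> (\<forall>a b. sc (a * b) = sc a * sc b) \<and>
     (\<forall>a z. sc a * z = z * sc a) \<and>
     (\<forall>u\<in>Vsp n isF. \<forall>w\<in>Vsp n isF. \<iota> (vadd u w) = \<iota> u + \<iota> w) \<and>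
     (\<forall>c. \<forall>u\<in>Vsp n isF. \<iota> (vscale c u) = sc c * \<iota> u) \<and>
     (\<forall>u\<in>Vsp n isF. \<iota> u * \<iota> u = sc (qform n t s u)) \<and>
     (\<forall>z. z \<in> alg_gen sc UNIV (\<iota> ` Vsp n isF)) \<and>
     (\<exists>B. F_lin_indep sc B \<and> card B = 2 ^ (2 * n + E_dim isF)) \<and>
     (\<forall>z w. star (z + w) = star z + star w) \<and>
     (\<forall>z w. star (z * w) = star w * star z) \<and>
     (\<forall>a. star (sc a) = sc a) \<and>
     (\<forall>u\<in>Vsp n isF. star (\<iota> u) = \<iota> u)"

definition GSpin1 ::
  "nat \<Rightarrow> bool \<Rightarrow> ('a::field \<Rightarrow> 'c::ring_1) \<Rightarrow> ('a qvec \<Rightarrow> 'c) \<Rightarrow> ('c \<Rightarrow> 'c) \<Rightarrow> 'c set" where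
  "GSpin1 n isF sc \<iota> star =
     {g \<in> even_gen sc (\<iota> ` V1sp n isF).
        (\<exists>c. c \<noteq> 0 \<and> star g * g = sc c) \<and>
        (\<forall>w\<in>V1sp n isF. \<exists>w'\<in>V1sp n isF. star g * \<iota> w * g = \<iota> w')}"

end

theory Submission
  imports Defs "HOL.Vector_Spaces"
begin


locale rel2 =
  fixes e f :: "'c::ring_1"
  assumes ee: "e*e = 0" and ff: "f*f = 0" and ef: "e*f + f*e = 1"
begin
lemma ee': "e*(e*z) = 0" by (simp add: mult.assoc[symmetric] ee)
lemma ff': "f*(f*z) = 0" by (simp add: mult.assoc[symmetric] ff)
lemma fe: "f*e = 1 - e*f" using ef by (simp add: algebra_simps eq_diff_eq)
lemma efe: "e*f*e = e" by (simp add: mult.assoc fe algebra_simps ee')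
lemma fef: "f*e*f = f" by (simp add: mult.assoc[symmetric] fe algebra_simps ff)
lemma efe': "e*(f*(e*z)) = e*z" by (metis efe mult.assoc)
lemma fef': "f*(e*(f*z)) = f*z" by (metis fef mult.assoc)
lemma PP: "(e*f)*(e*f) = e*f" by (metis efe mult.assoc)
lemma QQ: "(f*e)*(f*e) = f*e" by (metis fef mult.assoc)
lemma PQ: "(e*f)*(f*e) = 0" by (simp add: mult.assoc ff')
lemma QP: "(f*e)*(e*f) = 0" by (simp add: mult.assoc ee')
lemma Pe: "(e*f)*e = e" using efe .
lemma eQ: "e*(f*e) = e" by (metis efe mult.assoc)
lemma Qf: "(f*e)*f = f" using fef .
lemma fP: "f*(e*f) = f" by (metis fef mult.assoc)
lemma eP: "e*(e*f) = 0" by (simp add: ee')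
lemma Qe: "(f*e)*e = 0" by (simp add: mult.assoc ee)
lemma Pf: "(e*f)*f = 0" by (simp add: mult.assoc ff)
lemma fQ: "f*(f*e) = 0" by (simp add: ff')

definition "Ps = {0, e*f, f*e, e, f}"

lemma prod_table: "X \<in> {e*f, f*e, e, f} \<Longrightarrow> Y \<in> {e*f, f*e, e, f} \<Longrightarrow> X*Y \<in> Ps"
  unfolding Ps_def
  by (auto simp: PP QQ PQ QP Pe eQ Qf fP eP Qe Pf fQ ee ff mult.assoc[symmetric])
end



locale clif =
  fixes n :: nat and isF :: bool and t s :: "'a::field"
    and sc :: "'a \<Rightarrow> 'c::ring_1" and \<iota> :: "'a qvec \<Rightarrow> 'c" and star :: "'c \<Rightarrow> 'c"
  assumes cl: "clifford_alg n isF t s sc \<iota> star" and n1: "1 \<le> n"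
begin

lemma sc1: "sc 1 = 1" and sc_add: "sc (a+b) = sc a + sc b" and sc_mult: "sc (a*b) = sc a * sc b"
  and sc_comm: "sc a * z = z * sc a"
  and i_add: "u \<in> Vsp n isF \<Longrightarrow> w \<in> Vsp n isF \<Longrightarrow> \<iota> (vadd u w) = \<iota> u + \<iota> w"
  and i_scale: "u \<in> Vsp n isF \<Longrightarrow> \<iota> (vscale c u) = sc c * \<iota> u"
  and i_sq: "u \<in> Vsp n isF \<Longrightarrow> \<iota> u * \<iota> u = sc (qform n t s u)"
  and i_gen: "z \<in> alg_gen sc UNIV (\<iota> ` Vsp n isF)"
  and i_dim: "\<exists>B. F_lin_indep sc B \<and> card B = 2 ^ (2 * n + E_dim isF)"
  using cl unfolding clifford_alg_def by blast+

lemma sc0[simp]: "sc 0 = 0" using sc_add[of 0 0] by simp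
lemma sc_neg: "sc (-a) = - sc a" using sc_add[of a "-a"] minus_unique[of "sc a" "sc (-a)"] by simp
lemma sc_diff: "sc (a-b) = sc a - sc b" using sc_add[of a "-b"] by (simp add: sc_neg)

definition scl :: "'a \<Rightarrow> 'c \<Rightarrow> 'c" where "scl a z = sc a * z"

sublocale vs: vector_space scl
  by unfold_locales (auto simp: scl_def sc_add sc_mult sc1 algebra_simps mult.assoc)

lemma hom_r: "module_hom scl scl (\<lambda>w. w * X)"
  unfolding module_hom_iff using vs.module_axioms by (auto simp: scl_def algebra_simps mult.assoc)
lemma hom_l: "module_hom scl scl (\<lambda>w. X * w)"
  unfolding module_hom_iff using vs.module_axioms
  by (auto simp: scl_def distrib_left) (metis mult.assoc sc_comm)

lemma Vsp_vadd: "u \<in> Vsp n isF \<Longrightarrow> w \<in> Vsp n isF \<Longrightarrow> vadd u w \<in> Vsp n isF"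
  by (auto simp: Vsp_def vadd_def E_space_def split: if_splits)
lemma Vsp_vscale: "u \<in> Vsp n isF \<Longrightarrow> vscale c u \<in> Vsp n isF"
  by (auto simp: Vsp_def vscale_def E_space_def split: if_splits)

lemma polar: assumes "u \<in> Vsp n isF" "w \<in> Vsp n isF"
  shows "\<iota> u * \<iota> w + \<iota> w * \<iota> u = sc (qform n t s (vadd u w) - qform n t s u - qform n t s w)"
proof -
  have "sc (qform n t s (vadd u w)) = (\<iota> u + \<iota> w) * (\<iota> u + \<iota> w)"
    using i_sq[OF Vsp_vadd[OF assms]] i_add[OF assms] by simp
  also have "\<dots> = sc (qform n t s u) + (\<iota> u * \<iota> w + \<iota> w * \<iota> u) + sc (qform n t s w)"
    using i_sq assms by (simp add: algebra_simps)
  finally show ?thesis by (simp add: sc_diff sc_add algebra_simps)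
qed

abbreviation "e \<equiv> \<iota> (evec 1)"
abbreviation "f \<equiv> \<iota> (fvec 1)"

lemma evec_V: "1 \<le> i \<Longrightarrow> i \<le> n \<Longrightarrow> evec i \<in> Vsp n isF"
  by (auto simp: Vsp_def evec_def E_space_def)
lemma fvec_V: "1 \<le> i \<Longrightarrow> i \<le> n \<Longrightarrow> fvec i \<in> Vsp n isF"
  by (auto simp: Vsp_def fvec_def E_space_def)

lemma rel: "rel2 e f"
proof
  show "e*e = 0" using i_sq[OF evec_V[OF order_refl n1]]
    by (simp add: qform_def evec_def enorm_def)
  show "f*f = 0" using i_sq[OF fvec_V[OF order_refl n1]]
    by (simp add: qform_def fvec_def enorm_def)
  have "qform n t s (vadd (evec 1) (fvec 1)) = 1"
    using n1 by (simp add: qform_def fvec_def evec_def vadd_def enorm_def if_distrib cong: if_cong)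
  then show "e*f + f*e = 1" using polar[OF evec_V[OF order_refl n1] fvec_V[OF order_refl n1]]
    by (simp add: qform_def fvec_def evec_def enorm_def sc1)
qed

sublocale r: rel2 e f by (rule rel)

lemma V1_V: "u \<in> V1sp n isF \<Longrightarrow> u \<in> Vsp n isF" by (simp add: V1sp_def)

lemma anti_e: assumes "u \<in> V1sp n isF" shows "\<iota> u * e = - (e * \<iota> u)"
proof -
  obtain a z b where u: "u = (a,z,b)" by (cases u)
  have "qform n t s (vadd u (evec 1)) = qform n t s u"
    using assms n1 unfolding u qform_def evec_def vadd_def V1sp_def
    by (auto intro!: sum.cong)
  moreover have "qform n t s (evec 1) = 0" by (simp add: qform_def evec_def enorm_def)
  ultimately show ?thesis using polar[OF V1_V[OF assms] evec_V[OF order_refl n1]]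
    by (simp add: eq_neg_iff_add_eq_0)
qed

lemma anti_f: assumes "u \<in> V1sp n isF" shows "\<iota> u * f = - (f * \<iota> u)"
proof -
  obtain a z b where u: "u = (a,z,b)" by (cases u)
  have "qform n t s (vadd u (fvec 1)) = qform n t s u"
    using assms n1 unfolding u qform_def fvec_def vadd_def V1sp_def
    by (auto intro!: sum.cong)
  moreover have "qform n t s (fvec 1) = 0" by (simp add: qform_def fvec_def enorm_def)
  ultimately show ?thesis using polar[OF V1_V[OF assms] fvec_V[OF order_refl n1]]
    by (simp add: eq_neg_iff_add_eq_0)
qed

end


context clif begin

lemma twist:
  assumes G: "\<And>g. g \<in> G \<Longrightarrow> g*e = -(e*g) \<and> g*f = -(f*g)" and m1: "-1 \<in> R"
    and w: "w \<in> alg_gen sc R G"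
  shows "\<exists>w'\<in>alg_gen sc R G. e*w = w'*e \<and> f*w = w'*f \<and> w*e = e*w' \<and> w*f = f*w'"
  using w
proof (induction rule: alg_gen.induct)
  case (scal r)
  then show ?case by (intro bexI[of _ "sc r"]) (auto intro: alg_gen.scal simp: sc_comm)
next
  case (gen z)
  have "sc (-1) * z \<in> alg_gen sc R G" by (rule alg_gen.mult) (auto intro: alg_gen.intros m1 gen)
  then show ?case using G[OF gen] by (intro bexI[of _ "sc (-1) * z"]) (auto simp: sc_neg sc1)
next
  case (add z w)
  then obtain z' w' where "z' \<in> alg_gen sc R G" "w' \<in> alg_gen sc R G"
    "e*z = z'*e \<and> f*z = z'*f \<and> z*e = e*z' \<and> z*f = f*z'"
    "e*w = w'*e \<and> f*w = w'*f \<and> w*e = e*w' \<and> w*f = f*w'" by blast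
  then show ?case by (intro bexI[of _ "z'+w'"]) (auto simp: algebra_simps intro: alg_gen.add)
next
  case (mult z w)
  then obtain z' w' where "z' \<in> alg_gen sc R G" "w' \<in> alg_gen sc R G"
    and h1: "e*z = z'*e \<and> f*z = z'*f \<and> z*e = e*z' \<and> z*f = f*z'"
    and h2: "e*w = w'*e \<and> f*w = w'*f \<and> w*e = e*w' \<and> w*f = f*w'" by blast
  have "e*(z*w) = (z'*w')*e" using h1 h2 by (metis mult.assoc)
  moreover have "f*(z*w) = (z'*w')*f" using h1 h2 by (metis mult.assoc)
  moreover have "(z*w)*e = e*(z'*w')" using h1 h2 by (metis mult.assoc)
  moreover have "(z*w)*f = f*(z'*w')" using h1 h2 by (metis mult.assoc)
  ultimately show ?case using \<open>z' \<in> _\<close> \<open>w' \<in> _\<close> by (intro bexI[of _ "z'*w'"]) (auto intro: alg_gen.mult)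
qed

definition NF :: "'c set \<Rightarrow> 'c set" where
  "NF L = {a*(e*f) + b*(f*e) + c*e + d*f | a b c d. a\<in>L \<and> b\<in>L \<and> c\<in>L \<and> d\<in>L}"

context
  fixes R :: "'a set" and G :: "'c set"
  assumes G: "\<And>g. g \<in> G \<Longrightarrow> g*e = -(e*g) \<and> g*f = -(f*g)" and m1: "-1 \<in> R" and z0: "0 \<in> R"
begin

abbreviation "L \<equiv> alg_gen sc R G"

lemma L0: "0 \<in> L" using alg_gen.scal[OF z0, of sc G] by simp

lemma NF_add: assumes "z \<in> NF L" "w \<in> NF L" shows "z + w \<in> NF L"
proof -
  obtain a b c d where abcd: "a\<in>L" "b\<in>L" "c\<in>L" "d\<in>L" and zz: "z = a*(e*f) + b*(f*e) + c*e + d*f"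
    using assms(1) unfolding NF_def by blast
  obtain a' b' c' d' where abcd': "a'\<in>L" "b'\<in>L" "c'\<in>L" "d'\<in>L" and ww: "w = a'*(e*f) + b'*(f*e) + c'*e + d'*f"
    using assms(2) unfolding NF_def by blast
  have "z + w = (a+a')*(e*f) + (b+b')*(f*e) + (c+c')*e + (d+d')*f" unfolding zz ww by (simp add: algebra_simps)
  then show ?thesis unfolding NF_def using abcd abcd' by (blast intro: alg_gen.add)
qed

lemma NF_single: assumes l: "l \<in> L" and Y: "Y \<in> r.Ps" shows "l * Y \<in> NF L"
proof -
  have "Y = 0 \<or> Y = e*f \<or> Y = f*e \<or> Y = e \<or> Y = f" using Y unfolding r.Ps_def by blast
  then show ?thesis
  proof (elim disjE)
    assume "Y = 0" then show ?thesis unfolding NF_def using L0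
      by (intro CollectI exI[of _ 0]) simp
  next
    assume "Y = e*f" then show ?thesis unfolding NF_def using L0 l
      by (intro CollectI exI[of _ l] exI[of _ 0]) simp
  next
    assume "Y = f*e" then show ?thesis unfolding NF_def using L0 l
      by (intro CollectI exI[of _ 0] exI[of _ l]) simp
  next
    assume "Y = e" then show ?thesis unfolding NF_def using L0 l
      by (intro CollectI exI[of _ 0] exI[of _ 0] exI[of _ l]) simp
  next
    assume "Y = f" then show ?thesis unfolding NF_def using L0 l
      by (intro CollectI exI[of _ 0] exI[of _ 0] exI[of _ 0] exI[of _ l]) simp
  qed
qed

lemma NF_right: assumes z: "z \<in> NF L" and y: "y \<in> L" and X: "X \<in> {e*f, f*e, e, f}"
  shows "z * (y * X) \<in> NF L"
proof -
  obtain a b c d where abcd: "a\<in>L" "b\<in>L" "c\<in>L" "d\<in>L" and zz: "z = a*(e*f) + b*(f*e) + c*e + d*f"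
    using z unfolding NF_def by blast
  obtain y' where y': "y' \<in> L" "e*y = y'*e \<and> f*y = y'*f \<and> y*e = e*y' \<and> y*f = f*y'"
    using twist[OF G m1 y] by blast
  have Pc: "(e*f)*y = y*(e*f)" "(f*e)*y = y*(f*e)" using y' by (metis mult.assoc)+
  have t1: "a*(e*f)*(y*X) = (a*y)*((e*f)*X)"
  proof - have "a*(e*f)*(y*X) = a*(((e*f)*y)*X)" by (simp only: mult.assoc)
    also have "\<dots> = a*((y*(e*f))*X)" using Pc by (simp only:)
    also have "\<dots> = (a*y)*((e*f)*X)" by (simp only: mult.assoc) finally show ?thesis . qed
  have t2: "b*(f*e)*(y*X) = (b*y)*((f*e)*X)"
  proof - have "b*(f*e)*(y*X) = b*(((f*e)*y)*X)" by (simp only: mult.assoc)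
    also have "\<dots> = b*((y*(f*e))*X)" using Pc by (simp only:)
    also have "\<dots> = (b*y)*((f*e)*X)" by (simp only: mult.assoc) finally show ?thesis . qed
  have t3: "c*e*(y*X) = (c*y')*(e*X)"
  proof - have "c*e*(y*X) = c*((e*y)*X)" by (simp only: mult.assoc)
    also have "\<dots> = (c*y')*(e*X)" using y' by (simp only: mult.assoc) finally show ?thesis . qed
  have t4: "d*f*(y*X) = (d*y')*(f*X)"
  proof - have "d*f*(y*X) = d*((f*y)*X)" by (simp only: mult.assoc)
    also have "\<dots> = (d*y')*(f*X)" using y' by (simp only: mult.assoc) finally show ?thesis . qed
  have eq: "z * (y*X) = (a*y) * ((e*f)*X) + (b*y) * ((f*e)*X) + (c*y') * (e*X) + (d*y') * (f*X)"
    unfolding zz distrib_right t1 t2 t3 t4 ..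
  have m: "a*y \<in> L" "b*y \<in> L" "c*y' \<in> L" "d*y' \<in> L"
    using abcd y y' by (auto intro: alg_gen.mult)
  have p: "(e*f)*X \<in> r.Ps" "(f*e)*X \<in> r.Ps" "e*X \<in> r.Ps" "f*X \<in> r.Ps"
    using r.prod_table[OF _ X] by auto
  show ?thesis unfolding eq
    by (intro NF_add NF_single m p)
qed

lemma NF_mult: assumes "z \<in> NF L" "w \<in> NF L" shows "z * w \<in> NF L"
proof -
  obtain a b c d where abcd: "a\<in>L" "b\<in>L" "c\<in>L" "d\<in>L" and ww: "w = a*(e*f) + b*(f*e) + c*e + d*f"
    using assms(2) unfolding NF_def by blast
  have "z*w = z*(a*(e*f)) + z*(b*(f*e)) + z*(c*e) + z*(d*f)" unfolding ww by (simp add: algebra_simps)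
  then show ?thesis using abcd by (simp only:) (intro NF_add NF_right[OF assms(1)]; simp)
qed

end

end


context clif begin

lemma NF_gen:
  assumes z0: "0 \<in> R" and m1: "-1 \<in> R" and T1: "T1 \<subseteq> V1sp n isF"
    and dec: "\<And>u. u \<in> T \<Longrightarrow> \<exists>\<alpha>\<in>R. \<exists>\<beta>\<in>R. \<exists>u1\<in>T1. \<iota> u = sc \<alpha> * e + sc \<beta> * f + \<iota> u1"
    and z: "z \<in> alg_gen sc R (\<iota> ` T)"
  shows "z \<in> NF (alg_gen sc R (\<iota> ` T1))"
proof -
  have G: "\<And>g. g \<in> \<iota> ` T1 \<Longrightarrow> g*e = -(e*g) \<and> g*f = -(f*g)"
    using T1 anti_e anti_f by blast
  note L0' = L0[OF G m1 z0]
  show ?thesis using z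
  proof (induction rule: alg_gen.induct)
    case (scal r)
    have "sc r = sc r * (e*f) + sc r * (f*e) + 0 * e + 0 * f"
      using r.ef by (simp add: distrib_left[symmetric] add.assoc)
    then show ?case unfolding NF_def using L0' alg_gen.scal[OF scal, of sc "\<iota> ` T1"] by blast
  next
    case (gen z)
    then obtain u where u: "u \<in> T" "z = \<iota> u" by blast
    then obtain \<alpha> \<beta> u1 where h: "\<alpha>\<in>R" "\<beta>\<in>R" "u1\<in>T1" "\<iota> u = sc \<alpha> * e + sc \<beta> * f + \<iota> u1"
      using dec by blast
    have "z = \<iota> u1 * (e*f) + \<iota> u1 * (f*e) + sc \<alpha> * e + sc \<beta> * f"
      using h(4) r.ef u(2) by (simp add: distrib_left[symmetric] algebra_simps)
    then show ?case unfolding NF_def using h by (blast intro: alg_gen.intros)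
  next
    case (add z w) then show ?case using NF_add[OF G m1 z0] by blast
  next
    case (mult z w) then show ?case using NF_mult[OF G m1 z0] by blast
  qed
qed

definition cut1 :: "'a qvec \<Rightarrow> 'a qvec" where
  "cut1 u = ((fst u)(1 := 0), fst (snd u), (snd (snd u))(1 := 0))"

lemma cut1_eq: assumes "u \<in> Vsp n isF"
  shows "\<iota> u = sc (fst u 1) * e + sc (snd (snd u) 1) * f + \<iota> (cut1 u)"
proof -
  obtain a z b where u: "u = (a,z,b)" by (cases u)
  have c: "cut1 u \<in> Vsp n isF" using assms unfolding u cut1_def Vsp_def by auto
  have "u = vadd (vadd (vscale (a 1) (evec 1)) (vscale (b 1) (fvec 1))) (cut1 u)"
    unfolding u cut1_def vadd_def vscale_def evec_def fvec_def by (auto simp: fun_eq_iff)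
  then have "\<iota> u = \<iota> (vadd (vadd (vscale (a 1) (evec 1)) (vscale (b 1) (fvec 1))) (cut1 u))" by simp
  also have "\<dots> = sc (a 1) * e + sc (b 1) * f + \<iota> (cut1 u)"
    using c n1 by (simp add: i_add i_scale Vsp_vadd Vsp_vscale evec_V fvec_V)
  finally show ?thesis unfolding u by simp
qed

lemma cut1_V1: "u \<in> Vsp n isF \<Longrightarrow> cut1 u \<in> V1sp n isF"
  by (cases u) (auto simp: cut1_def Vsp_def V1sp_def)

lemma cut1_Lat1: "u \<in> Lat v n isF t s \<Longrightarrow> cut1 u \<in> Lat1 v n isF t s"
  unfolding Lat1_def using cut1_V1
  by (cases u) (auto simp: cut1_def Lat_def Vsp_def val_ring_def)

end


context clif begin

context
  fixes bs :: "'c list"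
  assumes anti: "\<And>i j. i < length bs \<Longrightarrow> j < length bs \<Longrightarrow> bs!i*bs!j + bs!j*bs!i \<in> range sc"
    and sq: "\<And>i. i < length bs \<Longrightarrow> bs!i*bs!i \<in> range sc"
begin

definition pl :: "nat list \<Rightarrow> 'c" where "pl l = prod_list (map (nth bs) l)"
definition Ml :: "nat set \<Rightarrow> 'c set" where "Ml X = {pl l | l. sorted_wrt (<) l \<and> set l \<subseteq> X}"

lemma Ml_mono: "X \<subseteq> Y \<Longrightarrow> Ml X \<subseteq> Ml Y" unfolding Ml_def by blast

lemma Ml_in: "sorted_wrt (<) l \<Longrightarrow> set l \<subseteq> X \<Longrightarrow> pl l \<in> Ml X" unfolding Ml_def by blast

lemma mono_step:
  "sorted_wrt (<) l \<Longrightarrow> set l \<subseteq> {..<length bs} \<Longrightarrow> j < length bs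
   \<Longrightarrow> bs!j * pl l \<in> vs.span (Ml (insert j (set l)))"
proof (induction l arbitrary: j)
  case Nil
  have "bs!j * pl [] = pl [j]" by (simp add: pl_def)
  moreover have "pl [j] \<in> Ml (insert j (set []))" by (rule Ml_in) auto
  ultimately show ?case by (simp add: vs.span_base)
next
  case (Cons i l)
  have il: "\<forall>x\<in>set l. i < x" "sorted_wrt (<) l" using Cons.prems(1) by auto
  have i: "i < length bs" using Cons.prems(2) by auto
  have lsub: "set l \<subseteq> {..<length bs}" using Cons.prems(2) by auto
  have plc: "pl (i#l) = bs!i * pl l" by (simp add: pl_def)
  consider "j < i" | "j = i" | "i < j" by linarith
  then show ?case
  proof cases
    case 1
    have "bs!j * pl (i#l) = pl (j#i#l)" by (simp add: pl_def)
    moreover have "pl (j#i#l) \<in> Ml (insert j (set (i#l)))"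
      by (rule Ml_in) (use 1 il in auto)
    ultimately show ?thesis by (simp add: vs.span_base)
  next
    case 2
    obtain c where c: "bs!i*bs!i = sc c" using sq[OF i] by blast
    have "bs!j * pl (i#l) = scl c (pl l)" unfolding plc 2 scl_def
      by (simp add: mult.assoc[symmetric] c)
    moreover have "pl l \<in> Ml (insert j (set (i#l)))" by (rule Ml_in) (use il in auto)
    ultimately show ?thesis by (simp add: vs.span_base vs.span_scale)
  next
    case 3
    obtain c where c: "bs!j*bs!i + bs!i*bs!j = sc c" using anti[OF Cons.prems(3) i] by blast
    have c': "bs!j*bs!i = sc c - bs!i*bs!j" by (rule eq_diff_eq[THEN iffD2, OF c])
    have e1: "bs!j * pl (i#l) = (bs!j*bs!i) * pl l" by (simp only: plc mult.assoc)
    have e2: "(bs!j*bs!i) * pl l = (sc c - bs!i*bs!j) * pl l"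
      by (simp only: c')
    have e3: "(sc c - bs!i*bs!j) * pl l = sc c * pl l - bs!i * (bs!j * pl l)" by (simp only: left_diff_distrib mult.assoc)
    note e1 also note e2 also note e3
    finally have eq: "bs!j * pl (i#l) = scl c (pl l) - bs!i * (bs!j * pl l)" unfolding scl_def .
    have s1: "scl c (pl l) \<in> vs.span (Ml (insert j (set (i#l))))"
      by (rule vs.span_scale, rule vs.span_base, rule Ml_in) (use il in auto)
    have IH: "bs!j * pl l \<in> vs.span (Ml (insert j (set l)))"
      using Cons.IH[OF il(2) lsub Cons.prems(3)] .
    have img: "(\<lambda>w. bs!i * w) ` Ml (insert j (set l)) \<subseteq> Ml (insert j (set (i#l)))"
    proof
      fix w assume "w \<in> (\<lambda>w. bs!i * w) ` Ml (insert j (set l))"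
      then obtain l' where l': "sorted_wrt (<) l'" "set l' \<subseteq> insert j (set l)" "w = bs!i * pl l'"
        unfolding Ml_def by blast
      have "w = pl (i#l')" using l'(3) by (simp add: pl_def)
      moreover have "sorted_wrt (<) (i#l')" using l' il 3 by auto
      moreover have "set (i#l') \<subseteq> insert j (set (i#l))" using l'(2) by auto
      ultimately show "w \<in> Ml (insert j (set (i#l)))" using Ml_in by simp
    qed
    have "bs!i * (bs!j * pl l) \<in> (\<lambda>w. bs!i * w) ` vs.span (Ml (insert j (set l)))"
      using IH by blast
    also have "\<dots> = vs.span ((\<lambda>w. bs!i * w) ` Ml (insert j (set l)))"
      by (rule module_hom.span_image[OF hom_l, symmetric])
    also have "\<dots> \<subseteq> vs.span (Ml (insert j (set (i#l))))" using img by (rule vs.span_mono)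
    finally have X: "bs!i * (bs!j * pl l) \<in> vs.span (Ml (insert j (set (i#l))))" .
    show ?thesis unfolding eq by (rule vs.span_diff[OF s1 X])
  qed
qed

abbreviation "MM \<equiv> Ml {..<length bs}"

lemma MM_card: "finite MM \<and> card MM \<le> 2 ^ length bs"
proof -
  let ?S = "{l. sorted_wrt (<) l \<and> set l \<subseteq> {..<length bs}}"
  have inj: "inj_on set ?S" by (auto intro!: inj_onI strict_sorted_equal)
  have sub: "set ` ?S \<subseteq> Pow {..<length bs}" by auto
  have fS: "finite ?S" using inj_on_finite[OF inj sub] by simp
  have cS: "card ?S \<le> 2 ^ length bs" using card_inj_on_le[OF inj sub] by (simp add: card_Pow)
  have "MM = pl ` ?S" unfolding Ml_def by blast
  then show ?thesis using fS cS card_image_le[OF fS, of pl] by simp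
qed

lemma MM_mult: assumes j: "j < length bs" and y: "y \<in> vs.span MM" shows "bs!j * y \<in> vs.span MM"
proof -
  have "(\<lambda>w. bs!j * w) ` MM \<subseteq> vs.span MM"
  proof
    fix w assume "w \<in> (\<lambda>w. bs!j * w) ` MM"
    then obtain l where l: "sorted_wrt (<) l" "set l \<subseteq> {..<length bs}" "w = bs!j * pl l"
      unfolding Ml_def by blast
    have "w \<in> vs.span (Ml (insert j (set l)))" using mono_step[OF l(1,2) j] l(3) by simp
    also have "\<dots> \<subseteq> vs.span MM" using l j by (intro vs.span_mono Ml_mono) auto
    finally show "w \<in> vs.span MM" .
  qed
  then have "vs.span ((\<lambda>w. bs!j * w) ` MM) \<subseteq> vs.span MM"
    by (intro vs.span_minimal) auto
  moreover have "bs!j * y \<in> vs.span ((\<lambda>w. bs!j * w) ` MM)"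
    using module_hom.span_image[OF hom_l, of "bs!j" MM] y by blast
  ultimately show ?thesis by blast
qed

lemma span_mult: assumes g: "g \<in> vs.span (set bs)" and y: "y \<in> vs.span MM" shows "g * y \<in> vs.span MM"
proof -
  have "(\<lambda>g. g * y) ` set bs \<subseteq> vs.span MM" using MM_mult y by (auto simp: in_set_conv_nth)
  then have "vs.span ((\<lambda>g. g * y) ` set bs) \<subseteq> vs.span MM"
    by (intro vs.span_minimal) auto
  moreover have "g * y \<in> vs.span ((\<lambda>g. g * y) ` set bs)"
    using module_hom.span_image[OF hom_r, of y "set bs"] g by blast
  ultimately show ?thesis by blast
qed

lemma alg_in_span: assumes G: "G \<subseteq> vs.span (set bs)" and z: "z \<in> alg_gen sc UNIV G"
  shows "z \<in> vs.span MM"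
proof -
  have "\<forall>y\<in>vs.span MM. z * y \<in> vs.span MM" using z
  proof (induction rule: alg_gen.induct)
    case (scal r)
    show ?case proof
      fix y assume "y \<in> vs.span MM"
      then have "scl r y \<in> vs.span MM" by (rule vs.span_scale)
      then show "sc r * y \<in> vs.span MM" by (simp only: scl_def)
    qed
  next
    case (gen z) then show ?case using span_mult G by blast
  next
    case (add z w) then show ?case by (simp add: distrib_right vs.span_add)
  next
    case (mult z w) then show ?case by (simp add: mult.assoc)
  qed
  moreover have "1 \<in> vs.span MM" using Ml_in[of "[]"] by (auto simp: pl_def intro: vs.span_base)
  ultimately show ?thesis by (metis mult_1_right)
qed

lemma alg_dim: assumes G: "G \<subseteq> vs.span (set bs)"
  shows "vs.dim (alg_gen sc UNIV G) \<le> 2 ^ length bs"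
proof -
  have "vs.dim (alg_gen sc UNIV G) \<le> card MM"
    using alg_in_span[OF G] MM_card by (intro vs.dim_le_card) auto
  then show ?thesis using MM_card by linarith
qed

end
end


context clif begin

definition eps1 :: "'a qvec" where "eps1 = ((\<lambda>_. 0), (1,0), (\<lambda>_. 0))"
definition eps2 :: "'a qvec" where "eps2 = ((\<lambda>_. 0), (0,1), (\<lambda>_. 0))"

definition bs0 :: "'c list" where
  "bs0 = map (\<lambda>i. \<iota> (evec (i+2))) [0..<n-1] @ map (\<lambda>i. \<iota> (fvec (i+2))) [0..<n-1]
         @ (if isF then [\<iota> eps1] else [\<iota> eps1, \<iota> eps2])"

lemma eps1_V: "eps1 \<in> Vsp n isF" by (auto simp: Vsp_def eps1_def E_space_def)
lemma eps2_V: "\<not> isF \<Longrightarrow> eps2 \<in> Vsp n isF" by (auto simp: Vsp_def eps2_def E_space_def)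

lemma bs0_V: "set bs0 \<subseteq> \<iota> ` Vsp n isF"
proof -
  have h: "\<forall>i<n-1. evec (i+2) \<in> Vsp n isF \<and> fvec (i+2) \<in> Vsp n isF"
  proof (intro allI impI conjI)
    fix i assume "i < n-1"
    then have "1 \<le> i+2" "i+2 \<le> n" by auto
    then show "evec (i+2) \<in> Vsp n isF" "fvec (i+2) \<in> Vsp n isF" using evec_V fvec_V by blast+
  qed
  show ?thesis unfolding bs0_def using h eps1_V eps2_V by (auto intro!: imageI)
qed

lemma bs0_len: "length bs0 = 2*(n-1) + E_dim isF"
  by (simp add: bs0_def E_dim_def)

lemma bs0_anti: "i < length bs0 \<Longrightarrow> j < length bs0 \<Longrightarrow> bs0!i*bs0!j + bs0!j*bs0!i \<in> range sc"
proof -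
  assume "i < length bs0" "j < length bs0"
  then have "bs0!i \<in> \<iota> ` Vsp n isF" "bs0!j \<in> \<iota> ` Vsp n isF" using bs0_V nth_mem by blast+
  then obtain u w where "u \<in> Vsp n isF" "w \<in> Vsp n isF" "bs0!i = \<iota> u" "bs0!j = \<iota> w" by blast
  then show ?thesis using polar by (simp add: rangeI)
qed

lemma bs0_sq: "i < length bs0 \<Longrightarrow> bs0!i*bs0!i \<in> range sc"
proof -
  assume "i < length bs0"
  then have "bs0!i \<in> \<iota> ` Vsp n isF" using bs0_V nth_mem by blast
  then obtain u where "u \<in> Vsp n isF" "bs0!i = \<iota> u" by blast
  then show ?thesis using i_sq by (simp add: rangeI)
qed

lemma V1_span: assumes u: "u \<in> V1sp n isF" shows "\<iota> u \<in> vs.span (set bs0)"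
proof -
  obtain a z b where uu: "u = (a,z,b)" by (cases u)
  have uV: "u \<in> Vsp n isF" using u by (simp add: V1sp_def)
  have a0: "\<And>i. (i < 1 \<or> n < i) \<Longrightarrow> a i = 0 \<and> b i = 0" using uV unfolding uu Vsp_def by auto
  have a1: "a 1 = 0" "b 1 = 0" using u unfolding uu V1sp_def by auto
  have zE: "z \<in> E_space isF" using uV unfolding uu Vsp_def by auto
  define tr where "tr k = ((\<lambda>i. if i \<le> k then a i else 0), z, (\<lambda>i. if i \<le> k then b i else 0))" for k
  have trV: "tr k \<in> Vsp n isF" for k using a0 zE unfolding tr_def Vsp_def by auto
  have sp: "x \<in> set bs0 \<Longrightarrow> x \<in> vs.span (set bs0)" for x by (rule vs.span_base)
  have scs: "x \<in> vs.span (set bs0) \<Longrightarrow> sc c * x \<in> vs.span (set bs0)" for c x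
    using vs.span_scale[of x "set bs0" c] by (simp add: scl_def)
  have ep1: "\<iota> eps1 \<in> set bs0" by (simp add: bs0_def)
  have ep2: "\<not> isF \<Longrightarrow> \<iota> eps2 \<in> set bs0" unfolding bs0_def by simp
  have "\<iota> (tr k) \<in> vs.span (set bs0)" for k
  proof (induction k)
    case 0
    have t0: "tr 0 = ((\<lambda>_. 0), z, (\<lambda>_. 0))" using a0 unfolding tr_def by (auto simp: fun_eq_iff)
    show ?case
    proof (cases isF)
      case True
      then have "tr 0 = vscale (fst z) eps1" using zE unfolding t0 eps1_def vscale_def E_space_def
        by (cases z) auto
      then show ?thesis using eps1_V by (simp add: i_scale) (rule scs, rule sp, rule ep1)
    next
      case False
      then have "tr 0 = vadd (vscale (fst z) eps1) (vscale (snd z) eps2)"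
        unfolding t0 eps1_def eps2_def vscale_def vadd_def by (cases z) auto
      then have X: "\<iota> (tr 0) = sc (fst z) * \<iota> eps1 + sc (snd z) * \<iota> eps2"
        by (simp add: i_add i_scale Vsp_vscale eps1_V eps2_V[OF False])
      show ?thesis unfolding X by (intro vs.span_add scs sp ep1 ep2 False)
    qed
  next
    case (Suc k)
    show ?case
    proof (cases "Suc k = 1 \<or> n < Suc k")
      case True
      then have "tr (Suc k) = tr k" using a0 a1 unfolding tr_def by (auto simp: fun_eq_iff le_Suc_eq)
      then show ?thesis using Suc by simp
    next
      case False
      then have k: "1 \<le> k" "k < n" by auto
      have ev: "evec (Suc k) \<in> Vsp n isF" "fvec (Suc k) \<in> Vsp n isF"
        using k evec_V[of "Suc k"] fvec_V[of "Suc k"] by auto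
      have eq: "tr (Suc k) = vadd (tr k) (vadd (vscale (a (Suc k)) (evec (Suc k))) (vscale (b (Suc k)) (fvec (Suc k))))"
        unfolding tr_def vadd_def vscale_def evec_def fvec_def by (auto simp: fun_eq_iff le_Suc_eq)
      have m1: "\<iota> (evec (Suc k)) \<in> set bs0"
      proof -
        have "\<iota> (evec ((k-1)+2)) \<in> set (map (\<lambda>i. \<iota> (evec (i+2))) [0..<n-1])"
          unfolding set_map by (rule imageI) (use k in auto)
        then show ?thesis using k unfolding bs0_def by auto
      qed
      have m2: "\<iota> (fvec (Suc k)) \<in> set bs0"
      proof -
        have "\<iota> (fvec ((k-1)+2)) \<in> set (map (\<lambda>i. \<iota> (fvec (i+2))) [0..<n-1])"
          unfolding set_map by (rule imageI) (use k in auto)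
        then show ?thesis using k unfolding bs0_def by auto
      qed
      have X: "\<iota> (tr (Suc k)) = \<iota> (tr k) + (sc (a (Suc k)) * \<iota> (evec (Suc k)) + sc (b (Suc k)) * \<iota> (fvec (Suc k)))"
      proof -
        have V1: "vscale (a (Suc k)) (evec (Suc k)) \<in> Vsp n isF" "vscale (b (Suc k)) (fvec (Suc k)) \<in> Vsp n isF"
          by (rule Vsp_vscale[OF ev(1)], rule Vsp_vscale[OF ev(2)])
        have V2: "vadd (vscale (a (Suc k)) (evec (Suc k))) (vscale (b (Suc k)) (fvec (Suc k))) \<in> Vsp n isF"
          using V1 by (rule Vsp_vadd)
        show ?thesis unfolding eq i_add[OF trV V2] i_add[OF V1] i_scale[OF ev(1)] i_scale[OF ev(2)] ..
      qed
      show ?thesis unfolding X by (intro vs.span_add scs sp Suc.IH m1 m2)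
    qed
  qed
  moreover have "tr n = u" unfolding tr_def uu using a0 by (auto simp: fun_eq_iff)
  ultimately show ?thesis by metis
qed

abbreviation "A \<equiv> alg_gen sc UNIV (\<iota> ` V1sp n isF)"

lemma A_dim: "vs.dim A \<le> 2 ^ (2*(n-1) + E_dim isF)"
proof -
  have "\<iota> ` V1sp n isF \<subseteq> vs.span (set bs0)" using V1_span by blast
  then show ?thesis using alg_dim[OF bs0_anti bs0_sq, of "\<iota> ` V1sp n isF"] bs0_len by simp
qed

lemma A_fin: "\<exists>G. finite G \<and> A \<subseteq> vs.span G"
  using alg_in_span[OF bs0_anti bs0_sq, of "\<iota> ` V1sp n isF"] V1_span MM_card[OF bs0_anti bs0_sq]
  by blast

end


context clif begin

interpretation vp: vector_space_pair scl scl by unfold_locales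

lemma hom_lin: "module_hom scl scl g \<Longrightarrow> Vector_Spaces.linear scl scl g"
  by (simp add: module_hom_iff_linear)

lemma dim_img_le:
  assumes h: "module_hom scl scl g" and G: "finite G" "S \<subseteq> vs.span G"
  shows "vs.dim (g ` S) \<le> vs.dim S"
proof -
  obtain B where B: "B \<subseteq> S" "vs.independent B" "S \<subseteq> vs.span B" "card B = vs.dim S"
    by (rule vs.basis_exists)
  have fB: "finite B" using vs.independent_span_bound[OF G(1) B(2)] B(1) G(2) by blast
  have "g ` S \<subseteq> g ` vs.span B" using B(3) by blast
  also have "\<dots> = vs.span (g ` B)" by (rule module_hom.span_image[OF h, symmetric])
  finally have "vs.dim (g ` S) \<le> card (g ` B)" using fB by (intro vs.dim_le_card) auto
  also have "\<dots> \<le> card B" using fB by (rule card_image_le)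
  finally show ?thesis using B(4) by simp
qed

lemma inj_dim:
  assumes h: "module_hom scl scl g" and G: "finite G" "S \<subseteq> vs.span G"
    and d: "vs.dim S \<le> vs.dim (g ` S)"
    and x: "x \<in> S" and gx: "g x = 0"
  shows "x = 0"
proof -
  obtain B where B: "B \<subseteq> S" "vs.independent B" "S \<subseteq> vs.span B" "card B = vs.dim S"
    by (rule vs.basis_exists)
  have fB: "finite B" using vs.independent_span_bound[OF G(1) B(2)] B(1) G(2) by blast
  have "g ` S \<subseteq> g ` vs.span B" using B(3) by blast
  also have "\<dots> = vs.span (g ` B)" by (rule module_hom.span_image[OF h, symmetric])
  finally have gS: "g ` S \<subseteq> vs.span (g ` B)" .
  have c1: "vs.dim (g ` S) \<le> card (g ` B)" using fB gS by (intro vs.dim_le_card) auto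
  have c2: "card (g ` B) \<le> card B" using fB by (rule card_image_le)
  have cgB: "card (g ` B) = card B" using c1 c2 d B(4) by linarith
  have inj: "inj_on g B" using eq_card_imp_inj_on[OF fB cgB] .
  obtain B' where B': "B' \<subseteq> g ` B" "vs.independent B'" "g ` B \<subseteq> vs.span B'"
    by (rule vs.maximal_independent_subset)
  have "g ` S \<subseteq> vs.span B'" using gS B'(3) vs.span_mono[OF B'(3)] by (simp add: vs.span_span)
  moreover have "B' \<subseteq> g ` S" using B'(1) B(1) by blast
  ultimately have "card B' = vs.dim (g ` S)" using B'(2) by (intro vs.basis_card_eq_dim)
  then have "card B' = card (g ` B)" using c1 cgB B(4) d card_mono[OF finite_imageI[OF fB] B'(1)] by linarith
  then have "B' = g ` B" using card_subset_eq[OF finite_imageI[OF fB] B'(1)] by simp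
  then have ind: "vs.independent (g ` B)" using B'(2) by simp
  show "x = 0"
    using vp.linear_indep_image_lemma[OF hom_lin[OF h] fB ind inj] x B(3) gx by blast
qed

end


context clif begin

lemma G1: "\<And>g. g \<in> \<iota> ` V1sp n isF \<Longrightarrow> g*e = -(e*g) \<and> g*f = -(f*g)"
  using anti_e anti_f by blast

lemma twA: "w \<in> A \<Longrightarrow> \<exists>w'\<in>A. e*w = w'*e \<and> f*w = w'*f \<and> w*e = e*w' \<and> w*f = f*w'"
  by (rule twist[OF G1]) auto

lemma commP: assumes "w \<in> A" shows "(e*f)*w = w*(e*f)" "(f*e)*w = w*(f*e)"
proof -
  obtain w' where "e*w = w'*e \<and> f*w = w'*f \<and> w*e = e*w' \<and> w*f = f*w'" using twA[OF assms] by blast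
  then show "(e*f)*w = w*(e*f)" "(f*e)*w = w*(f*e)" by (metis mult.assoc)+
qed

lemma A_scale: "w \<in> A \<Longrightarrow> sc c * w \<in> A" by (intro alg_gen.mult alg_gen.scal) auto
lemma A_diff: "w \<in> A \<Longrightarrow> u \<in> A \<Longrightarrow> w - u \<in> A"
  using alg_gen.add[OF _ A_scale[of u "-1"], of w] by (simp add: sc_neg sc1)

lemma UNIV_NF: "z \<in> NF A"
proof (rule NF_gen[of UNIV "V1sp n isF" "Vsp n isF"])
  show "\<And>u. u \<in> Vsp n isF \<Longrightarrow> \<exists>\<alpha>\<in>UNIV. \<exists>\<beta>\<in>UNIV. \<exists>u1\<in>V1sp n isF. \<iota> u = sc \<alpha> * e + sc \<beta> * f + \<iota> u1"
    using cut1_eq cut1_V1 by blast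
qed (auto simp: i_gen)

lemma img_sub: assumes "finite G" "A \<subseteq> vs.span G"
  shows "(\<lambda>w. w*X) ` A \<subseteq> vs.span ((\<lambda>w. w*X) ` G)" "finite ((\<lambda>w. w*X) ` G)"
proof -
  have "(\<lambda>w. w*X) ` A \<subseteq> (\<lambda>w. w*X) ` vs.span G" using assms by blast
  also have "\<dots> = vs.span ((\<lambda>w. w*X) ` G)" by (rule module_hom.span_image[OF hom_r, symmetric])
  finally show "(\<lambda>w. w*X) ` A \<subseteq> vs.span ((\<lambda>w. w*X) ` G)" .
  show "finite ((\<lambda>w. w*X) ` G)" using assms by simp
qed

lemma dims: assumes X: "X \<in> {e*f, f*e, e, f}" shows "vs.dim A \<le> vs.dim ((\<lambda>w. w*X) ` A)"
proof -
  obtain G where G: "finite G" "A \<subseteq> vs.span G" using A_fin by blast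
  define I where "I X = (\<lambda>w. w*X) ` A" for X
  have dI: "vs.dim (I Y) \<le> vs.dim A" for Y unfolding I_def by (rule dim_img_le[OF hom_r G])
  have bas: "\<exists>B. finite B \<and> I Y \<subseteq> vs.span B \<and> card B = vs.dim (I Y)" for Y
  proof -
    obtain B where B: "B \<subseteq> I Y" "vs.independent B" "I Y \<subseteq> vs.span B" "card B = vs.dim (I Y)"
      by (rule vs.basis_exists)
    have "finite B" using vs.independent_span_bound[OF img_sub(2)[OF G, of Y] B(2)] B(1) img_sub(1)[OF G, of Y]
      unfolding I_def by blast
    then show ?thesis using B by blast
  qed
  obtain B1 where B1: "finite B1" "I (e*f) \<subseteq> vs.span B1" "card B1 = vs.dim (I (e*f))" using bas by blast
  obtain B2 where B2: "finite B2" "I (f*e) \<subseteq> vs.span B2" "card B2 = vs.dim (I (f*e))" using bas by blast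
  obtain B3 where B3: "finite B3" "I e \<subseteq> vs.span B3" "card B3 = vs.dim (I e)" using bas by blast
  obtain B4 where B4: "finite B4" "I f \<subseteq> vs.span B4" "card B4 = vs.dim (I f)" using bas by blast
  let ?U = "B1 \<union> B2 \<union> B3 \<union> B4"
  have all: "z \<in> vs.span ?U" for z
  proof -
    obtain a b c d where abcd: "a\<in>A" "b\<in>A" "c\<in>A" "d\<in>A" and zz: "z = a*(e*f) + b*(f*e) + c*e + d*f"
      using UNIV_NF[of z] unfolding NF_def by blast
    have "a*(e*f) \<in> vs.span ?U" using B1(2) abcd vs.span_mono[of B1 ?U] unfolding I_def by blast
    moreover have "b*(f*e) \<in> vs.span ?U" using B2(2) abcd vs.span_mono[of B2 ?U] unfolding I_def by blast
    moreover have "c*e \<in> vs.span ?U" using B3(2) abcd vs.span_mono[of B3 ?U] unfolding I_def by blast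
    moreover have "d*f \<in> vs.span ?U" using B4(2) abcd vs.span_mono[of B4 ?U] unfolding I_def by blast
    ultimately show ?thesis unfolding zz by (intro vs.span_add)
  qed
  obtain Bc where Bc: "F_lin_indep sc Bc" "card Bc = 2 ^ (2 * n + E_dim isF)" using i_dim by blast
  have fBc: "finite Bc" using Bc(1) unfolding F_lin_indep_def by blast
  have iBc: "vs.independent Bc"
  proof (rule vs.independent_if_scalars_zero[OF fBc])
    fix g x assume "(\<Sum>x\<in>Bc. scl (g x) x) = 0" "x \<in> Bc"
    then show "g x = 0" using Bc(1) unfolding F_lin_indep_def scl_def by blast
  qed
  have "card Bc \<le> card ?U" using vs.independent_span_bound[OF _ iBc, of ?U] B1 B2 B3 B4 all by blast
  also have "\<dots> \<le> card B1 + card B2 + card B3 + card B4" by (intro order.trans[OF card_Un_le] add_mono order.refl)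
  finally have sum: "2 ^ (2 * n + E_dim isF) \<le> vs.dim (I (e*f)) + vs.dim (I (f*e)) + vs.dim (I e) + vs.dim (I f)"
    using B1 B2 B3 B4 Bc by simp
  have "2 * n + E_dim isF = (2*(n-1) + E_dim isF) + 2" using n1 by simp
  then have "(2::nat) ^ (2 * n + E_dim isF) = 4 * 2 ^ (2*(n-1) + E_dim isF)" by (simp add: power_add)
  then have "4 * vs.dim A \<le> vs.dim (I (e*f)) + vs.dim (I (f*e)) + vs.dim (I e) + vs.dim (I f)"
    using sum A_dim by linarith
  then have "vs.dim A \<le> vs.dim (I X)" using X dI[of "e*f"] dI[of "f*e"] dI[of e] dI[of f] by auto
  then show ?thesis unfolding I_def .
qed

lemma injX: assumes X: "X \<in> {e*f, f*e, e, f}" and w: "w \<in> A" and wX: "w * X = 0" shows "w = 0"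
proof -
  obtain G where G: "finite G" "A \<subseteq> vs.span G" using A_fin by blast
  show ?thesis by (rule inj_dim[OF hom_r G dims[OF X] w wX])
qed

end


lemma alg_gen_mono: assumes "R \<subseteq> R'" "S \<subseteq> S'" and "z \<in> alg_gen sc R S" shows "z \<in> alg_gen sc R' S'"
  using assms(3) by induction (use assms(1,2) in \<open>auto intro: alg_gen.intros\<close>)

context clif begin

lemma hlP: "w \<in> A \<Longrightarrow> (e*f)*(w*Y) = w*((e*f)*Y)"
proof -
  assume w: "w \<in> A"
  have "(e*f)*(w*Y) = ((e*f)*w)*Y" by (simp only: mult.assoc)
  also have "\<dots> = (w*(e*f))*Y" by (simp only: commP(1)[OF w])
  finally show ?thesis by (simp only: mult.assoc)
qed
lemma hlQ: "w \<in> A \<Longrightarrow> (f*e)*(w*Y) = w*((f*e)*Y)"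
proof -
  assume w: "w \<in> A"
  have "(f*e)*(w*Y) = ((f*e)*w)*Y" by (simp only: mult.assoc)
  also have "\<dots> = (w*(f*e))*Y" by (simp only: commP(2)[OF w])
  finally show ?thesis by (simp only: mult.assoc)
qed

lemma uniq:
  assumes abcd: "a\<in>A" "b\<in>A" "c\<in>A" "d\<in>A" and S: "a*(e*f) + b*(f*e) + c*e + d*f = 0"
  shows "a = 0 \<and> b = 0 \<and> c = 0 \<and> d = 0"
proof -
  let ?S = "a*(e*f) + b*(f*e) + c*e + d*f"
  have PS: "(e*f)*?S = a*(e*f) + c*e"
    unfolding distrib_left hlP[OF abcd(1)] hlP[OF abcd(2)] hlP[OF abcd(3)] hlP[OF abcd(4)]
      r.PP r.PQ r.Pe r.Pf by simp
  have QS: "(f*e)*?S = b*(f*e) + d*f"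
    unfolding distrib_left hlQ[OF abcd(1)] hlQ[OF abcd(2)] hlQ[OF abcd(3)] hlQ[OF abcd(4)]
      r.QP r.QQ r.Qe r.Qf by simp
  have "(a*(e*f) + c*e)*(e*f) = a*(e*f)"
    by (simp del: One_nat_def add: distrib_right mult.assoc r.efe' r.ee' r.fef' r.ff' r.eQ r.fP)
  then have a0: "a*(e*f) = 0" using PS S by simp
  have "(a*(e*f) + c*e)*(f*e) = c*e"
    by (simp del: One_nat_def add: distrib_right mult.assoc r.efe' r.ee' r.fef' r.ff' r.eQ r.fP)
  then have c0: "c*e = 0" using PS S by simp
  have "(b*(f*e) + d*f)*(f*e) = b*(f*e)"
    by (simp del: One_nat_def add: distrib_right mult.assoc r.efe' r.ee' r.fef' r.ff' r.eQ r.fP)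
  then have b0: "b*(f*e) = 0" using QS S by simp
  have "(b*(f*e) + d*f)*(e*f) = d*f"
    by (simp del: One_nat_def add: distrib_right mult.assoc r.efe' r.ee' r.fef' r.ff' r.eQ r.fP)
  then have d0: "d*f = 0" using QS S by simp
  show ?thesis using injX a0 b0 c0 d0 abcd by blast
qed

lemma even_comm: "y \<in> even_gen sc (\<iota> ` V1sp n isF) \<Longrightarrow> y*e = e*y \<and> y*f = f*y"
proof (induction rule: even_gen.induct)
  case (scal r) then show ?case by (simp add: sc_comm)
next
  case (gen2 z w)
  then have "z*e = -(e*z) \<and> z*f = -(f*z)" "w*e = -(e*w) \<and> w*f = -(f*w)" using G1 by blast+
  then have h: "z*e = -(e*z)" "z*f = -(f*z)" "w*e = -(e*w)" "w*f = -(f*w)" by blast+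
  have "z*w*e = z*(w*e)" by (simp only: mult.assoc)
  also have "\<dots> = z*(-(e*w))" by (simp only: h(3))
  also have "\<dots> = -((z*e)*w)" by (simp only: mult_minus_right mult.assoc)
  also have "\<dots> = -((-(e*z))*w)" by (simp only: h(1))
  also have "\<dots> = e*(z*w)" by (simp only: mult_minus_left minus_minus mult.assoc)
  finally have 1: "z*w*e = e*(z*w)" .
  have "z*w*f = z*(w*f)" by (simp only: mult.assoc)
  also have "\<dots> = z*(-(f*w))" by (simp only: h(4))
  also have "\<dots> = -((z*f)*w)" by (simp only: mult_minus_right mult.assoc)
  also have "\<dots> = -((-(f*z))*w)" by (simp only: h(2))
  also have "\<dots> = f*(z*w)" by (simp only: mult_minus_left minus_minus mult.assoc)
  finally have 2: "z*w*f = f*(z*w)" .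
  show ?case using 1 2 by simp
next
  case (add z w) then show ?case by (simp add: algebra_simps)
next
  case (mult z w)
  then have h: "z*e = e*z" "z*f = f*z" "w*e = e*w" "w*f = f*w" by blast+
  have "z*w*e = z*(e*w)" by (simp only: mult.assoc h)
  also have "\<dots> = (z*e)*w" by (simp only: mult.assoc)
  also have "\<dots> = e*(z*w)" by (simp only: h mult.assoc)
  finally have 1: "z*w*e = e*(z*w)" .
  have "z*w*f = z*(f*w)" by (simp only: mult.assoc h)
  also have "\<dots> = (z*f)*w" by (simp only: mult.assoc)
  also have "\<dots> = f*(z*w)" by (simp only: h mult.assoc)
  finally have 2: "z*w*f = f*(z*w)" .
  show ?case using 1 2 by blast
qed

lemma even_A: "y \<in> even_gen sc (\<iota> ` V1sp n isF) \<Longrightarrow> y \<in> A"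
  by (induction rule: even_gen.induct) (auto intro: alg_gen.intros)

lemma Z_eq:
  assumes y: "y*e = e*y" "y*f = f*y" and x: "x \<in> V1sp n isF"
  shows "(1 + f * \<iota> x) * ((e * f + sc lam * (f * e)) * y)
        = y*(e*f) + (sc lam * y)*(f*e) + 0*e + (-(\<iota> x * y))*f"
proof -
  have xe: "\<iota> x * e = -(e * \<iota> x)" and xf: "\<iota> x * f = -(f * \<iota> x)" using anti_e[OF x] anti_f[OF x] by auto
  have s1: "(e * f + sc lam * (f * e)) * y = y*(e*f) + (sc lam * y)*(f*e)"
  proof -
    have "(e*f)*y = e*(f*y)" by (simp only: mult.assoc)
    also have "\<dots> = e*(y*f)" by (simp only: y)
    also have "\<dots> = (e*y)*f" by (simp only: mult.assoc)
    also have "\<dots> = (y*e)*f" by (simp only: y)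
    finally have "(e*f)*y = y*(e*f)" by (simp only: mult.assoc)
    have "(f*e)*y = f*(e*y)" by (simp only: mult.assoc)
    also have "\<dots> = f*(y*e)" by (simp only: y)
    also have "\<dots> = (f*y)*e" by (simp only: mult.assoc)
    also have "\<dots> = (y*f)*e" by (simp only: y)
    finally have "(f*e)*y = y*(f*e)" by (simp only: mult.assoc)
    note \<open>(e*f)*y = y*(e*f)\<close> this
    moreover have "sc lam * (f*e) * y = sc lam * ((f*e)*y)" by (simp add: mult.assoc)
    ultimately show ?thesis by (simp add: distrib_right mult.assoc)
  qed
  have s2: "f * \<iota> x * (y*(e*f)) = -(\<iota> x * y) * f"
  proof -
    have "f * \<iota> x * (y*(e*f)) = f * (\<iota> x * (y * e)) * f" by (simp add: mult.assoc)
    also have "\<dots> = f * (\<iota> x * (e * y)) * f" using y by simp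
    also have "\<dots> = f * ((\<iota> x * e) * y) * f" by (simp add: mult.assoc)
    also have "\<dots> = - (f * e * (\<iota> x * (y * f)))" unfolding xe by (simp add: mult.assoc)
    also have "\<dots> = - (f * e * (\<iota> x * (f * y)))" using y by simp
    also have "\<dots> = - (f * e * ((\<iota> x * f) * y))" by (simp add: mult.assoc)
    also have "\<dots> = (f * e * f) * (\<iota> x * y)" unfolding xf by (simp add: mult.assoc)
    also have "\<dots> = f * (\<iota> x * y)" unfolding r.fef ..
    finally have A: "f * \<iota> x * (y*(e*f)) = f * (\<iota> x * y)" by simp
    have "(\<iota> x * y) * f = \<iota> x * (y * f)" by (simp add: mult.assoc)
    also have "\<dots> = \<iota> x * (f * y)" using y by simp
    also have "\<dots> = (\<iota> x * f) * y" by (simp add: mult.assoc)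
    also have "\<dots> = - (f * (\<iota> x * y))" unfolding xf by (simp add: mult.assoc)
    finally show ?thesis using A by simp
  qed
  have scm: "z*(sc a*w) = sc a*(z*w)" for z w a
  proof -
    have "z*(sc a*w) = (z*sc a)*w" by (simp only: mult.assoc)
    also have "\<dots> = (sc a*z)*w" by (simp only: sc_comm)
    finally show ?thesis by (simp only: mult.assoc)
  qed
  have s3: "f * \<iota> x * ((sc lam * y)*(f*e)) = 0"
  proof -
    have "f * \<iota> x * ((sc lam * y)*(f*e)) = f * \<iota> x * (sc lam * (y*(f*e)))" by (simp only: mult.assoc)
    also have "\<dots> = sc lam * (f * \<iota> x * (y*(f*e)))" by (rule scm)
    also have "f * \<iota> x * (y*(f*e)) = f * (\<iota> x * ((y * f) * e))" by (simp only: mult.assoc)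
    also have "\<dots> = f * (\<iota> x * ((f * y) * e))" using y by simp
    also have "\<dots> = f * ((\<iota> x * f) * (y * e))" by (simp only: mult.assoc)
    also have "\<dots> = - (f * (f * (\<iota> x * (y * e))))" unfolding xf by (simp add: mult.assoc)
    also have "\<dots> = 0" by (simp del: One_nat_def add: r.ff')
    finally show ?thesis by simp
  qed
  have "(1 + f * \<iota> x) * ((e * f + sc lam * (f * e)) * y)
     = (1 + f * \<iota> x) * (y*(e*f) + (sc lam * y)*(f*e))" by (simp only: s1)
  also have "\<dots> = (y*(e*f) + (sc lam * y)*(f*e)) + (f * \<iota> x * (y*(e*f)) + f * \<iota> x * ((sc lam * y)*(f*e)))"
    by (simp only: distrib_right mult_1_left distrib_left add_ac)
  also have "\<dots> = (y*(e*f) + (sc lam * y)*(f*e)) + (-(\<iota> x * y) * f + 0)" by (simp only: s2 s3)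
  finally show ?thesis by simp
qed

end


lemma padic_R: assumes "padic_local_field (v::'a::field \<Rightarrow> int)"
  shows "0 \<in> val_ring v" "1 \<in> val_ring v" "-1 \<in> val_ring v"
proof -
  have m: "\<And>x y. x \<noteq> 0 \<Longrightarrow> y \<noteq> 0 \<Longrightarrow> v (x * y) = v x + v y"
    using assms unfolding padic_local_field_def by blast
  have "v 1 = v 1 + v 1" using m[of 1 1] by simp
  then have v1: "v 1 = 0" by simp
  have "v 1 = v (-1) + v (-1)" using m[of "-1" "-1"] by simp
  then have "v (-1) = 0" using v1 by simp
  then show "0 \<in> val_ring v" "1 \<in> val_ring v" "-1 \<in> val_ring v" using v1 by (auto simp: val_ring_def)
qed

lemma zero_OE: "0 \<in> val_ring v \<Longrightarrow> (0,0) \<in> O_E v isF t s"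
  unfolding O_E_def
  by (auto intro!: exI[of _ 1] exI[of _ "\<lambda>_. 0"] simp: emul_def)

theorem claim3p2:
  fixes v :: "'a::field \<Rightarrow> int" and n :: nat and isF :: bool and t s :: 'a
    and sc :: "'a \<Rightarrow> 'c::ring_1" and \<iota> :: "'a qvec \<Rightarrow> 'c" and star :: "'c \<Rightarrow> 'c"
    and x :: "'a qvec" and lam :: 'a and y :: 'c
  assumes "padic_local_field v"
    and "1 \<le> n"
    and "isF \<or> t ^ 2 - 4 * s \<noteq> 0"
    and "clifford_alg n isF t s sc \<iota> star"
    and "x \<in> V1sp n isF"
    and "lam \<noteq> 0"
    and "y \<in> GSpin1 n isF sc \<iota> star"
  shows "(1 + \<iota> (fvec 1) * \<iota> x) * ((\<iota> (evec 1) * \<iota> (fvec 1) + sc lam * (\<iota> (fvec 1) * \<iota> (evec 1))) * y)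
           \<in> alg_gen sc (val_ring v) (\<iota> ` Lat v n isF t s)
     \<longleftrightarrow> y \<in> alg_gen sc (val_ring v) (\<iota> ` Lat1 v n isF t s)
       \<and> sc lam * y \<in> alg_gen sc (val_ring v) (\<iota> ` Lat1 v n isF t s)
       \<and> \<iota> x * y \<in> alg_gen sc (val_ring v) (\<iota> ` Lat1 v n isF t s)"
proof -
  interpret clif n isF t s sc \<iota> star using assms(4,2) by unfold_locales
  note R = padic_R[OF assms(1)]
  define L where "L = alg_gen sc (val_ring v) (\<iota> ` Lat v n isF t s)"
  define L1 where "L1 = alg_gen sc (val_ring v) (\<iota> ` Lat1 v n isF t s)"
  have Lat1V1: "Lat1 v n isF t s \<subseteq> V1sp n isF" by (auto simp: Lat1_def)
  have L1L: "L1 \<subseteq> L" unfolding L1_def L_def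
  proof
    fix z assume "z \<in> alg_gen sc (val_ring v) (\<iota> ` Lat1 v n isF t s)"
    then show "z \<in> alg_gen sc (val_ring v) (\<iota> ` Lat v n isF t s)"
      by (rule alg_gen_mono[rotated 2]) (auto simp: Lat1_def)
  qed
  have L1A: "L1 \<subseteq> A" unfolding L1_def
  proof
    fix z assume "z \<in> alg_gen sc (val_ring v) (\<iota> ` Lat1 v n isF t s)"
    then show "z \<in> A"
      by (rule alg_gen_mono[rotated 2]) (use Lat1V1 in auto)
  qed
  have yG: "y \<in> even_gen sc (\<iota> ` V1sp n isF)" using assms(7) by (simp add: GSpin1_def)
  have yA: "y \<in> A" by (rule even_A[OF yG])
  have yc: "y*e = e*y" "y*f = f*y" using even_comm[OF yG] by auto
  have xA: "\<iota> x \<in> A" using assms(5) by (auto intro: alg_gen.gen)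
  have A0: "0 \<in> A" using alg_gen.scal[of 0 UNIV sc] by simp
  have Zeq: "(1 + f * \<iota> x) * ((e * f + sc lam * (f * e)) * y)
        = y*(e*f) + (sc lam * y)*(f*e) + 0*e + (-(\<iota> x * y))*f"
    by (rule Z_eq[OF yc assms(5)])
  have L1neg: "w \<in> L1 \<Longrightarrow> - w \<in> L1" for w
    using alg_gen.mult[OF alg_gen.scal[OF R(3)], of w sc] unfolding L1_def by (simp add: sc_neg sc1)
  have main: "(1 + f * \<iota> x) * ((e * f + sc lam * (f * e)) * y) \<in> L
     \<longleftrightarrow> y \<in> L1 \<and> sc lam * y \<in> L1 \<and> \<iota> x * y \<in> L1"
  proof
    assume "(1 + f * \<iota> x) * ((e * f + sc lam * (f * e)) * y) \<in> L"
    then have "(1 + f * \<iota> x) * ((e * f + sc lam * (f * e)) * y) \<in> NF L1"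
      unfolding L1_def L_def
    proof (rule NF_gen[OF R(1) R(3) Lat1V1, rotated])
      fix u assume u: "u \<in> Lat v n isF t s"
      then have uV: "u \<in> Vsp n isF" by (simp add: Lat_def)
      have "fst u 1 \<in> val_ring v" "snd (snd u) 1 \<in> val_ring v" using u by (auto simp: Lat_def)
      then show "\<exists>\<alpha>\<in>val_ring v. \<exists>\<beta>\<in>val_ring v. \<exists>u1\<in>Lat1 v n isF t s. \<iota> u = sc \<alpha> * e + sc \<beta> * f + \<iota> u1"
        using cut1_eq[OF uV] cut1_Lat1[OF u] by blast
    qed
    then obtain a b c d where abcd: "a\<in>L1" "b\<in>L1" "c\<in>L1" "d\<in>L1"
      and zz: "(1 + f * \<iota> x) * ((e * f + sc lam * (f * e)) * y) = a*(e*f) + b*(f*e) + c*e + d*f"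
      unfolding NF_def by blast
    have eq: "y*(e*f) + (sc lam * y)*(f*e) + 0*e + (-(\<iota> x * y))*f = a*(e*f) + b*(f*e) + c*e + d*f"
      using Zeq zz by simp
    have "(y - a)*(e*f) + (sc lam * y - b)*(f*e) + (0 - c)*e + (-(\<iota> x * y) - d)*f
          = (y*(e*f) + (sc lam * y)*(f*e) + 0*e + (-(\<iota> x * y))*f) - (a*(e*f) + b*(f*e) + c*e + d*f)"
      by (simp only: left_diff_distrib) (simp add: algebra_simps)
    also have "\<dots> = 0" using eq by simp
    finally have z: "(y - a)*(e*f) + (sc lam * y - b)*(f*e) + (0 - c)*e + (-(\<iota> x * y) - d)*f = 0" .
    have aA: "a \<in> A" "b \<in> A" "c \<in> A" "d \<in> A" using abcd L1A by auto
    have xyA: "\<iota> x * y \<in> A" using xA yA by (rule alg_gen.mult)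
    have nxyA: "-(\<iota> x * y) \<in> A" using A_diff[OF A0 xyA] by simp
    have inA: "y - a \<in> A" "sc lam * y - b \<in> A" "0 - c \<in> A" "-(\<iota> x * y) - d \<in> A"
      using A_diff[OF yA aA(1)] A_diff[OF A_scale[OF yA] aA(2)] A_diff[OF A0 aA(3)] A_diff[OF nxyA aA(4)] .
    have "y - a = 0" "sc lam * y - b = 0" "-(\<iota> x * y) - d = 0" using uniq[OF inA z] by auto
    then have "y = a" "sc lam * y = b" "\<iota> x * y = - d" by (auto simp: algebra_simps)
    then show "y \<in> L1 \<and> sc lam * y \<in> L1 \<and> \<iota> x * y \<in> L1" using abcd L1neg by auto
  next
    assume h: "y \<in> L1 \<and> sc lam * y \<in> L1 \<and> \<iota> x * y \<in> L1"
    have eL: "e \<in> L" "f \<in> L" unfolding L_def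
      using n1 R(1,2) zero_OE[OF R(1), of isF t s]
      by (auto intro!: alg_gen.gen imageI simp: Lat_def evec_def fvec_def Vsp_def E_space_def)
    have b1: "- (\<iota> x * y) \<in> L" using L1neg h L1L by blast
    have b2: "0 \<in> L" unfolding L_def using alg_gen.scal[OF R(1), of sc] by simp
    have b3: "y \<in> L" "sc lam * y \<in> L" using h L1L by auto
    note mm = alg_gen.mult[of _ sc "val_ring v" "\<iota> ` Lat v n isF t s"]
    note aa = alg_gen.add[of _ sc "val_ring v" "\<iota> ` Lat v n isF t s"]
    note a2 = b3[unfolded L_def] eL[unfolded L_def] b2[unfolded L_def] b1[unfolded L_def]
    have "y*(e*f) + (sc lam * y)*(f*e) + 0*e + (-(\<iota> x * y))*f \<in> alg_gen sc (val_ring v) (\<iota> ` Lat v n isF t s)"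
      by (rule aa[OF aa[OF aa[OF mm[OF a2(1) mm[OF a2(3,4)]] mm[OF a2(2) mm[OF a2(4,3)]]] mm[OF a2(5,3)]] mm[OF a2(6,4)]])
    then have "y*(e*f) + (sc lam * y)*(f*e) + 0*e + (-(\<iota> x * y))*f \<in> L" unfolding L_def .
    then show "(1 + f * \<iota> x) * ((e * f + sc lam * (f * e)) * y) \<in> L"
      using Zeq by simp
  qed
  then show ?thesis unfolding L_def L1_def .
qed


end
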